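(* For a wiretap set $W\in\mathcal W_r$, let $C^*_W$ be the primary minimum cut separating $\rho$ from $D_W$ in the residual graph $\mathcal G_W$. Then $|C^*_W|=\Omega(W)$.
   Context: $\mathcal G=(\mathcal V,\mathcal E)$ is a finite directed acyclic graph (multiple edges allowed); $S$ is the set of source nodes (exactly the nodes without input edges), $\rho\notin S$ the sink (no output edges), and every node other than $\rho$ has a directed path to $\rho$. For a node $\sigma$ and edge $e$, $\sigma\to e$ means there is a directed path from $\sigma$ whose last edge is $e$. For $C\subseteq\mathcal E$: $D_C=\{\sigma\in S:\exists e\in C,\ \sigma\to e\}$, $I_C=\{\sigma\in S:$ no path from $\sigma$ to $\rho$ after deleting $C\}$; $\Lambda(\mathcal N)=\{C\subseteq\mathcal E:I_C\neq\emptyset\}$. $\mathcal W_r=\{W\subseteq\mathcal E:|W|\le r\}$ for a nonnegative integer $r$. For $W\subseteq\mathcal E$, $\Omega(W)=\min\{|C|-|W|: C\in\Lambda(\mathcal N),\ W\subseteq C,\ D_W\subseteq I_C\}$. $\mathcal G_W$ is the graph obtained from $\mathcal G$ by deleting the edges of $W$. In a graph, a cut separating node $\rho$ from a node set $U$ is an edge set whose deletion leaves no path from any node of $U$ to $\rho$; a minimum cut has minimum size, and the primary minimum cut is the (unique) minimum cut that separates from $U$ every minimum cut separating $\rho$ from $U$ (an edge set $X$ is separated from $U$ by $C$ if every path from a node of $U$ to an edge of $X$ uses an edge of $C$). *)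

theory Defs
  imports Main
begin

text \<open>A finite directed multigraph: nodes V, edges E (abstract edge identifiers,
so parallel edges are allowed), tail tail and head head of each edge.\<close>

definition epath :: "'e set \<Rightarrow> ('e \<Rightarrow> 'v) \<Rightarrow> ('e \<Rightarrow> 'v) \<Rightarrow> 'e list \<Rightarrow> bool" where
  "epath F tail head es \<longleftrightarrow> es \<noteq> [] \<and> set es \<subseteq> F \<and>
     (\<forall>i. Suc i < length es \<longrightarrow> head (es ! i) = tail (es ! Suc i))"

definition reach :: "'e set \<Rightarrow> ('e \<Rightarrow> 'v) \<Rightarrow> ('e \<Rightarrow> 'v) \<Rightarrow> 'v \<Rightarrow> 'v \<Rightarrow> bool" where
  "reach F tail head u v \<longleftrightarrow> u = v \<or>
     (\<exists>es. epath F tail head es \<and> tail (List.hd es) = u \<and> head (last es) = v)"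

definition reaches_edge :: "'e set \<Rightarrow> ('e \<Rightarrow> 'v) \<Rightarrow> ('e \<Rightarrow> 'v) \<Rightarrow> 'v \<Rightarrow> 'e \<Rightarrow> bool" where
  "reaches_edge F tail head \<sigma> e \<longleftrightarrow>
     (\<exists>es. epath F tail head es \<and> tail (List.hd es) = \<sigma> \<and> last es = e)"

definition network :: "'v set \<Rightarrow> 'e set \<Rightarrow> ('e \<Rightarrow> 'v) \<Rightarrow> ('e \<Rightarrow> 'v) \<Rightarrow> 'v set \<Rightarrow> 'v \<Rightarrow> bool" where
  "network V E tail head S \<rho> \<longleftrightarrow>
     finite V \<and> finite E \<and> (\<forall>e\<in>E. tail e \<in> V \<and> head e \<in> V) \<and>
     \<not> (\<exists>es. epath E tail head es \<and> tail (List.hd es) = head (last es)) \<and>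
     S = {v \<in> V. \<not> (\<exists>e\<in>E. head e = v)} \<and>
     \<rho> \<in> V \<and> \<rho> \<notin> S \<and> \<not> (\<exists>e\<in>E. tail e = \<rho>) \<and>
     (\<forall>v\<in>V. v \<noteq> \<rho> \<longrightarrow> reach E tail head v \<rho>)"

definition D_set :: "'e set \<Rightarrow> ('e \<Rightarrow> 'v) \<Rightarrow> ('e \<Rightarrow> 'v) \<Rightarrow> 'v set \<Rightarrow> 'e set \<Rightarrow> 'v set" where
  "D_set E tail head S C = {\<sigma> \<in> S. \<exists>e\<in>C. reaches_edge E tail head \<sigma> e}"

definition I_set :: "'e set \<Rightarrow> ('e \<Rightarrow> 'v) \<Rightarrow> ('e \<Rightarrow> 'v) \<Rightarrow> 'v set \<Rightarrow> 'v \<Rightarrow> 'e set \<Rightarrow> 'v set" where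
  "I_set E tail head S \<rho> C = {\<sigma> \<in> S. \<not> reach (E - C) tail head \<sigma> \<rho>}"

definition Lambda :: "'e set \<Rightarrow> ('e \<Rightarrow> 'v) \<Rightarrow> ('e \<Rightarrow> 'v) \<Rightarrow> 'v set \<Rightarrow> 'v \<Rightarrow> 'e set set" where
  "Lambda E tail head S \<rho> = {C. C \<subseteq> E \<and> I_set E tail head S \<rho> C \<noteq> {}}"

definition wiretap_sets :: "'e set \<Rightarrow> nat \<Rightarrow> 'e set set" where
  "wiretap_sets E r = {W. W \<subseteq> E \<and> card W \<le> r}"

definition Omega :: "'e set \<Rightarrow> ('e \<Rightarrow> 'v) \<Rightarrow> ('e \<Rightarrow> 'v) \<Rightarrow> 'v set \<Rightarrow> 'v \<Rightarrow> 'e set \<Rightarrow> nat" where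
  "Omega E tail head S \<rho> W = Min {card C - card W | C.
      C \<in> Lambda E tail head S \<rho> \<and> W \<subseteq> C \<and> D_set E tail head S W \<subseteq> I_set E tail head S \<rho> C}"

definition is_cut :: "'e set \<Rightarrow> ('e \<Rightarrow> 'v) \<Rightarrow> ('e \<Rightarrow> 'v) \<Rightarrow> 'v set \<Rightarrow> 'v \<Rightarrow> 'e set \<Rightarrow> bool" where
  "is_cut F tail head U \<rho> X \<longleftrightarrow> X \<subseteq> F \<and> (\<forall>u\<in>U. \<not> reach (F - X) tail head u \<rho>)"

definition is_min_cut :: "'e set \<Rightarrow> ('e \<Rightarrow> 'v) \<Rightarrow> ('e \<Rightarrow> 'v) \<Rightarrow> 'v set \<Rightarrow> 'v \<Rightarrow> 'e set \<Rightarrow> bool" where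
  "is_min_cut F tail head U \<rho> X \<longleftrightarrow> is_cut F tail head U \<rho> X \<and>
     (\<forall>Y. is_cut F tail head U \<rho> Y \<longrightarrow> card X \<le> card Y)"

definition separated_by :: "'e set \<Rightarrow> ('e \<Rightarrow> 'v) \<Rightarrow> ('e \<Rightarrow> 'v) \<Rightarrow> 'v set \<Rightarrow> 'e set \<Rightarrow> 'e set \<Rightarrow> bool" where
  "separated_by F tail head U C X \<longleftrightarrow>
     (\<forall>u\<in>U. \<forall>x\<in>X. \<forall>es. epath F tail head es \<and> tail (List.hd es) = u \<and> last es = x
        \<longrightarrow> set es \<inter> C \<noteq> {})"

definition is_primary_min_cut :: "'e set \<Rightarrow> ('e \<Rightarrow> 'v) \<Rightarrow> ('e \<Rightarrow> 'v) \<Rightarrow> 'v set \<Rightarrow> 'v \<Rightarrow> 'e set \<Rightarrow> bool" where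
  "is_primary_min_cut F tail head U \<rho> C \<longleftrightarrow> is_min_cut F tail head U \<rho> C \<and>
     (\<forall>C'. is_min_cut F tail head U \<rho> C' \<longrightarrow> separated_by F tail head U C C')"

end

theory Submission
  imports Defs
begin

lemma epath_snoc:
  assumes "epath F tail head es" "g \<in> F" "head (last es) = tail g"
  shows "epath F tail head (es @ [g])"
  unfolding epath_def
proof (intro conjI allI impI)
  show "es @ [g] \<noteq> []" by simp
  show "set (es @ [g]) \<subseteq> F" using assms unfolding epath_def by auto
  fix i assume i: "Suc i < length (es @ [g])"
  have ne: "es \<noteq> []" using assms unfolding epath_def by auto
  show "head ((es @ [g]) ! i) = tail ((es @ [g]) ! Suc i)"
  proof (cases "Suc i < length es")
    case True
    then show ?thesis using assms(1) unfolding epath_def by (simp add: nth_append)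
  next
    case False
    hence "i = length es - 1" using i by simp
    then show ?thesis using assms(3) ne by (simp add: nth_append last_conv_nth)
  qed
qed
lemma trancl_epath:
  assumes "(f, g) \<in> {(f,g). f \<in> E \<and> g \<in> E \<and> head f = tail g}\<^sup>+"
  shows "\<exists>es. epath E tail head es \<and> hd es = f \<and> head (last es) = tail g"
  using assms
proof (induction rule: trancl_induct)
  case (base y)
  then have "epath E tail head [f]" "head (last [f]) = tail y" unfolding epath_def by auto
  then show ?case by (metis list.sel(1))
next
  case (step y z)
  then obtain es where es: "epath E tail head es" "hd es = f" "head (last es) = tail y" by blast
  have yE: "y \<in> E" and "head y = tail z" using step by auto
  have "epath E tail head (es @ [y])" using epath_snoc[OF es(1) yE es(3)] .
  moreover have "hd (es @ [y]) = f" using es unfolding epath_def by auto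
  ultimately show ?case using \<open>head y = tail z\<close> by (rule_tac x="es @ [y]" in exI) auto
qed

lemma source_reaches:
  assumes net: "network V E tail head S \<rho>" and eE: "e \<in> E"
  shows "\<exists>\<sigma>\<in>S. reaches_edge E tail head \<sigma> e"
proof -
  define R where "R = {(f,g). f \<in> E \<and> g \<in> E \<and> head f = tail g}"
  have fin: "finite E" using net unfolding network_def by (elim conjE)
  have "R \<subseteq> E \<times> E" unfolding R_def by auto
  hence finR: "finite R" using fin by (meson finite_SigmaI rev_finite_subset)
  have acyc: "acyclic R"
    unfolding acyclic_def
  proof
    fix f
    show "(f, f) \<notin> R\<^sup>+"
    proof
      assume "(f, f) \<in> R\<^sup>+"
      hence "(f, f) \<in> {(f,g). f \<in> E \<and> g \<in> E \<and> head f = tail g}\<^sup>+" unfolding R_def .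
      from trancl_epath[OF this] obtain es where es: "epath E tail head es" "hd es = f" "head (last es) = tail f"
        by (elim exE conjE)
      have "tail (hd es) = head (last es)" using es(2,3) by simp
      hence ex: "\<exists>es. epath E tail head es \<and> tail (List.hd es) = head (last es)" using es(1) by blast
      have "\<not> (\<exists>es. epath E tail head es \<and> tail (List.hd es) = head (last es))"
        using net unfolding network_def by (elim conjE)
      thus False using ex by (rule notE)
    qed
  qed
  have wfR: "wf R" using finite_acyclic_wf[OF finR acyc] .
  have "g \<in> E \<longrightarrow> (\<exists>\<sigma>\<in>S. reaches_edge E tail head \<sigma> g)" for g
  proof (induction g rule: wf_induct_rule[OF wfR])
    case (1 g)
    show ?case
    proof
      assume gE: "g \<in> E"
      show "\<exists>\<sigma>\<in>S. reaches_edge E tail head \<sigma> g"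
      proof (cases "\<exists>f\<in>E. head f = tail g")
        case True
        then obtain f where f: "f \<in> E" "head f = tail g" by blast
        hence "(f, g) \<in> R" using gE unfolding R_def by auto
        then obtain \<sigma> es where s: "\<sigma> \<in> S" "epath E tail head es" "tail (hd es) = \<sigma>" "last es = f"
          using 1 f unfolding reaches_edge_def by blast
        have "epath E tail head (es @ [g])" using epath_snoc[OF s(2) gE] s(4) f by auto
        moreover have "tail (hd (es @ [g])) = \<sigma>" using s unfolding epath_def by auto
        ultimately show ?thesis using s(1) unfolding reaches_edge_def
          by (rule_tac x=\<sigma> in bexI, rule_tac x="es @ [g]" in exI) auto
      next
        case False
        have S: "S = {v \<in> V. \<not> (\<exists>e\<in>E. head e = v)}" and "tail g \<in> V"
          using net gE unfolding network_def by auto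
        have "tail g \<in> S" using S \<open>tail g \<in> V\<close> False by auto
        moreover have "reaches_edge E tail head (tail g) g"
          unfolding reaches_edge_def epath_def using gE by (rule_tac x="[g]" in exI) auto
        ultimately show ?thesis by blast
      qed
    qed
  qed
  thus ?thesis using eE by blast
qed

theorem lemma7:
  fixes V :: "'v set" and E :: "'e set" and tail head :: "'e \<Rightarrow> 'v"
    and S :: "'v set" and \<rho> :: 'v and r :: nat and W C :: "'e set"
  assumes "network V E tail head S \<rho>"
    and "W \<in> wiretap_sets E r"
    and "W \<noteq> {}"
    and "is_primary_min_cut (E - W) tail head (D_set E tail head S W) \<rho> C"
  shows "card C = Omega E tail head S \<rho> W"
proof -
  define D where "D = D_set E tail head S W"
  define A where "A = {card C' - card W | C'.
      C' \<in> Lambda E tail head S \<rho> \<and> W \<subseteq> C' \<and> D_set E tail head S W \<subseteq> I_set E tail head S \<rho> C'}"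
  have finE: "finite E" using assms(1) unfolding network_def by simp
  have WE: "W \<subseteq> E" using assms(2) unfolding wiretap_sets_def by auto
  have finW: "finite W" using WE finE finite_subset by blast
  have mc: "is_min_cut (E - W) tail head D \<rho> C"
    using assms(4) unfolding is_primary_min_cut_def D_def by (rule conjunct1)
  have cC: "is_cut (E - W) tail head D \<rho> C" using mc unfolding is_min_cut_def by (rule conjunct1)
  have minC: "\<And>Y. is_cut (E - W) tail head D \<rho> Y \<Longrightarrow> card C \<le> card Y"
    using mc unfolding is_min_cut_def by blast
  have CE: "C \<subseteq> E - W" using cC unfolding is_cut_def by (rule conjunct1)
  have finC: "finite C" using CE finE finite_subset by blast
  have cutC: "\<forall>u\<in>D. \<not> reach (E - W - C) tail head u \<rho>"
    using cC unfolding is_cut_def by (rule conjunct2)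
  have DS: "D \<subseteq> S" unfolding D_def D_set_def by auto
  obtain e where "e \<in> W" using assms(3) by blast
  hence "e \<in> E" using WE by (rule subsetD[rotated])
  then obtain \<sigma> where "\<sigma> \<in> S" "reaches_edge E tail head \<sigma> e"
    using source_reaches[OF assms(1) \<open>e \<in> E\<close>] by (elim bexE)
  hence \<sigma>D: "\<sigma> \<in> D" unfolding D_def D_set_def using \<open>e \<in> W\<close> by (intro CollectI conjI bexI)
  have eqE: "E - (C \<union> W) = E - W - C" by auto
  have IC: "D \<subseteq> I_set E tail head S \<rho> (C \<union> W)"
    unfolding I_set_def eqE using cutC DS by auto
  have inA: "card C \<in> A"
  proof -
    have "card (C \<union> W) = card C + card W"
      using card_Un_disjoint[OF finC finW] CE by auto
    moreover have "C \<union> W \<in> Lambda E tail head S \<rho>"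
      unfolding Lambda_def using CE WE IC \<sigma>D by auto
    ultimately have "card C = card (C \<union> W) - card W \<and> C \<union> W \<in> Lambda E tail head S \<rho> \<and> W \<subseteq> C \<union> W \<and> D_set E tail head S W \<subseteq> I_set E tail head S \<rho> (C \<union> W)"
      using IC unfolding D_def by simp
    thus ?thesis unfolding A_def by blast
  qed
  have lb: "card C \<le> y" if "y \<in> A" for y
  proof -
    from \<open>y \<in> A\<close> obtain C' where y0: "y = card C' - card W \<and> C' \<in> Lambda E tail head S \<rho> \<and> W \<subseteq> C' \<and>
      D_set E tail head S W \<subseteq> I_set E tail head S \<rho> C'"
      unfolding A_def by (auto simp only: mem_Collect_eq)
    have y: "y = card C' - card W" "C' \<in> Lambda E tail head S \<rho>" "W \<subseteq> C'"
      "D \<subseteq> I_set E tail head S \<rho> C'" using y0 unfolding D_def by simp_all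
    have C'E: "C' \<subseteq> E" using y(2) unfolding Lambda_def by simp
    have eq2: "E - W - (C' - W) = E - C'" using y(3) by blast
    have nr: "\<forall>u\<in>D. \<not> reach (E - C') tail head u \<rho>"
      using y(4) unfolding I_set_def by blast
    have "C' - W \<subseteq> E - W" using C'E by blast
    hence "is_cut (E - W) tail head D \<rho> (C' - W)"
      unfolding is_cut_def eq2 using nr by (intro conjI)
    hence "card C \<le> card (C' - W)" by (rule minC)
    also have "card (C' - W) = card C' - card W"
      using card_Diff_subset[OF finW y(3)] .
    finally show ?thesis using y(1) by simp
  qed
  have finA: "finite A"
  proof -
    have "A \<subseteq> (\<lambda>C'. card C' - card W) ` Pow E"
    proof
      fix y assume "y \<in> A"
      then obtain C' where y: "y = card C' - card W" "C' \<in> Lambda E tail head S \<rho>"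
        unfolding A_def by blast
      have "C' \<in> Pow E" using y(2) unfolding Lambda_def by simp
      thus "y \<in> (\<lambda>C'. card C' - card W) ` Pow E" using y(1) by (rule rev_image_eqI)
    qed
    moreover have "finite ((\<lambda>C'. card C' - card W) ` Pow E)" using finE by simp
    ultimately show ?thesis by (rule finite_subset)
  qed
  have m: "Min A = card C" using Min_eqI[OF finA lb inA] .
  have o: "Omega E tail head S \<rho> W = Min A" unfolding Omega_def A_def by (rule refl)
  show ?thesis unfolding o m by (rule refl)
qed

end
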